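(* MWL is strictly more expressive than WL: every WL query is expressible in MWL, but the query "there are two paths of different lengths from a given node $s$ to a given node $t$" is expressible in MWL and not in WL.
   Context: Data graphs. Fix a finite alphabet $\Sigma$ and infinite data domains $\mathcal D_{\mathrm{id}}$ and $\mathcal D_{\mathrm{prop}}$. A data graph is $G=(V,E,\mathrm{id},\mathrm{dataof})$ with $V$ a finite nonempty set of nodes, $E\subseteq V\times\Sigma\times V$, $\mathrm{id}:V\to\mathcal D_{\mathrm{id}}$ injective and $\mathrm{dataof}:V\to\mathcal D_{\mathrm{prop}}$. A path is a sequence $\rho=v_0a_1v_1\cdots a_nv_n$ ($n\ge 0$) with $(v_{i-1},a_i,v_i)\in E$ for all $i$; its length is $n$, its positions are $0,\dots,n$. WL (walk logic). Path variables $\pi,\omega,\dots$ range over paths; each position variable $\ell^\pi$ has a sort $\pi$ and ranges over positions of the path assigned to $\pi$. Atoms: $E_a(\ell^\pi,m^\pi)$ ($m=\ell+1$ and the $m$-th label of the path is $a$); $\ell^\pi<m^\pi$ (same sort only); $\ell^\pi\equiv_{\mathrm{id}} n^\omega$ (the nodes at these positions are equal); $\ell^\pi\equiv_{\mathrm{data}} n^\omega$ (these nodes have equal $\mathrm{dataof}$). Closed under $\neg,\vee,\exists\ell^\pi,\exists\pi$. MWL (multi-path walk logic) is WL extended with atoms $\ell^\pi<n^\omega$ for arbitrary (possibly different) sorts $\pi,\omega$, true iff the position assigned to $\ell^\pi$ is smaller, as an integer, than the position assigned to $n^\omega$. The nodes $s,t$ are given as single-node paths (free path variables constrained to have length $0$).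 *)

theory Defs
  imports Main "HOL-Library.Infinite_Typeclass"
begin

(* Data graphs. Nodes are natural numbers (any finite graph is isomorphic to one
   of these); 'a is the finite alphabet Sigma, 'i = D_id, 'd = D_prop. *)
record ('a, 'i, 'd) dgraph =
  nodes :: "nat set"
  edges :: "(nat \<times> 'a \<times> nat) set"
  idof  :: "nat \<Rightarrow> 'i"
  dataof :: "nat \<Rightarrow> 'd"

definition is_dgraph :: "('a, 'i, 'd) dgraph \<Rightarrow> bool" where
  "is_dgraph G \<longleftrightarrow> finite (nodes G) \<and> nodes G \<noteq> {}
     \<and> edges G \<subseteq> nodes G \<times> UNIV \<times> nodes G \<and> inj_on (idof G) (nodes G)"

(* A path v0 a1 v1 ... an vn is represented as ([v0,...,vn], [a1,...,an]). *)
type_synonym 'a path = "nat list \<times> 'a list"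

definition plen :: "'a path \<Rightarrow> nat" where "plen \<rho> = length (snd \<rho>)"
definition pnode :: "'a path \<Rightarrow> nat \<Rightarrow> nat" where "pnode \<rho> i = fst \<rho> ! i"
(* the i-th label a_i, for 1 <= i <= length *)
definition plabel :: "'a path \<Rightarrow> nat \<Rightarrow> 'a" where "plabel \<rho> i = snd \<rho> ! (i - 1)"

definition is_path :: "('a, 'i, 'd) dgraph \<Rightarrow> 'a path \<Rightarrow> bool" where
  "is_path G \<rho> \<longleftrightarrow> length (fst \<rho>) = Suc (length (snd \<rho>)) \<and> pnode \<rho> 0 \<in> nodes G
     \<and> (\<forall>i. 1 \<le> i \<and> i \<le> plen \<rho> \<longrightarrow> (pnode \<rho> (i - 1), plabel \<rho> i, pnode \<rho> i) \<in> edges G)"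

(* Path variables are natural numbers; a position variable l^pi is a pair (l, pi),
   its sort being the second component. *)
type_synonym pathvar = nat
type_synonym posvar = "nat \<times> pathvar"

datatype 'a fm =
    Edge 'a posvar posvar
  | Less posvar posvar
  | EqId posvar posvar
  | EqData posvar posvar
  | Neg "'a fm"
  | Disj "'a fm" "'a fm"
  | ExPos posvar "'a fm"
  | ExPath pathvar "'a fm"

fun fpv :: "'a fm \<Rightarrow> posvar set" where
  "fpv (Edge a x y) = {x, y}"
| "fpv (Less x y) = {x, y}"
| "fpv (EqId x y) = {x, y}"
| "fpv (EqData x y) = {x, y}"
| "fpv (Neg \<phi>) = fpv \<phi>"
| "fpv (Disj \<phi> \<psi>) = fpv \<phi> \<union> fpv \<psi>"
| "fpv (ExPos x \<phi>) = fpv \<phi> - {x}"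
| "fpv (ExPath p \<phi>) = fpv \<phi>"

fun fpathv :: "'a fm \<Rightarrow> pathvar set" where
  "fpathv (Edge a x y) = {snd x, snd y}"
| "fpathv (Less x y) = {snd x, snd y}"
| "fpathv (EqId x y) = {snd x, snd y}"
| "fpathv (EqData x y) = {snd x, snd y}"
| "fpathv (Neg \<phi>) = fpathv \<phi>"
| "fpathv (Disj \<phi> \<psi>) = fpathv \<phi> \<union> fpathv \<psi>"
| "fpathv (ExPos x \<phi>) = {snd x} \<union> fpathv \<phi>"
| "fpathv (ExPath p \<phi>) = fpathv \<phi> - {p}"

fun wf_MWL :: "'a fm \<Rightarrow> bool" where
  "wf_MWL (Edge a x y) = (snd x = snd y)"
| "wf_MWL (Less x y) = True"
| "wf_MWL (EqId x y) = True"
| "wf_MWL (EqData x y) = True"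
| "wf_MWL (Neg \<phi>) = wf_MWL \<phi>"
| "wf_MWL (Disj \<phi> \<psi>) = (wf_MWL \<phi> \<and> wf_MWL \<psi>)"
| "wf_MWL (ExPos x \<phi>) = wf_MWL \<phi>"
| "wf_MWL (ExPath p \<phi>) = (wf_MWL \<phi> \<and> (\<forall>x\<in>fpv \<phi>. snd x \<noteq> p))"

fun wf_WL :: "'a fm \<Rightarrow> bool" where
  "wf_WL (Edge a x y) = (snd x = snd y)"
| "wf_WL (Less x y) = (snd x = snd y)"
| "wf_WL (EqId x y) = True"
| "wf_WL (EqData x y) = True"
| "wf_WL (Neg \<phi>) = wf_WL \<phi>"
| "wf_WL (Disj \<phi> \<psi>) = (wf_WL \<phi> \<and> wf_WL \<psi>)"
| "wf_WL (ExPos x \<phi>) = wf_WL \<phi>"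
| "wf_WL (ExPath p \<phi>) = (wf_WL \<phi> \<and> (\<forall>x\<in>fpv \<phi>. snd x \<noteq> p))"

fun sat :: "('a, 'i, 'd) dgraph \<Rightarrow> (pathvar \<Rightarrow> 'a path) \<Rightarrow> (posvar \<Rightarrow> nat) \<Rightarrow> 'a fm \<Rightarrow> bool" where
  "sat G P L (Edge a x y) = (L y = L x + 1 \<and> L y \<le> plen (P (snd y)) \<and> plabel (P (snd y)) (L y) = a)"
| "sat G P L (Less x y) = (L x < L y)"
| "sat G P L (EqId x y) = (idof G (pnode (P (snd x)) (L x)) = idof G (pnode (P (snd y)) (L y)))"
| "sat G P L (EqData x y) = (dataof G (pnode (P (snd x)) (L x)) = dataof G (pnode (P (snd y)) (L y)))"
| "sat G P L (Neg \<phi>) = (\<not> sat G P L \<phi>)"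
| "sat G P L (Disj \<phi> \<psi>) = (sat G P L \<phi> \<or> sat G P L \<psi>)"
| "sat G P L (ExPos x \<phi>) = (\<exists>i \<le> plen (P (snd x)). sat G P (L(x := i)) \<phi>)"
| "sat G P L (ExPath p \<phi>) = (\<exists>\<rho>. is_path G \<rho> \<and> sat G (P(p := \<rho>)) L \<phi>)"

type_synonym ('a, 'i, 'd) query = "('a, 'i, 'd) dgraph \<Rightarrow> nat \<Rightarrow> nat \<Rightarrow> bool"

(* s and t are the path variables 0 and 1, assigned single-node paths. *)
definition var_s :: pathvar where "var_s = 0"
definition var_t :: pathvar where "var_t = 1"

definition single :: "nat \<Rightarrow> 'a path" where "single v = ([v], [])"

definition st_assign :: "nat \<Rightarrow> nat \<Rightarrow> pathvar \<Rightarrow> 'a path" where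
  "st_assign u v = (\<lambda>p. if p = var_s then single u else if p = var_t then single v else single u)"

definition expresses :: "'a fm \<Rightarrow> ('a, 'i, 'd) query \<Rightarrow> bool" where
  "expresses \<phi> Q \<longleftrightarrow> fpv \<phi> = {} \<and> fpathv \<phi> \<subseteq> {var_s, var_t} \<and>
     (\<forall>(G :: ('a, 'i, 'd) dgraph) u v. is_dgraph G \<longrightarrow> u \<in> nodes G \<longrightarrow> v \<in> nodes G \<longrightarrow>
        (sat G (st_assign u v) (\<lambda>_. 0) \<phi> \<longleftrightarrow> Q G u v))"

definition WL_expressible :: "('a, 'i, 'd) query \<Rightarrow> bool" where
  "WL_expressible Q \<longleftrightarrow> (\<exists>\<phi>. wf_WL \<phi> \<and> expresses \<phi> Q)"

definition MWL_expressible :: "('a, 'i, 'd) query \<Rightarrow> bool" where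
  "MWL_expressible Q \<longleftrightarrow> (\<exists>\<phi>. wf_MWL \<phi> \<and> expresses \<phi> Q)"

definition diff_len_query :: "('a, 'i, 'd) query" where
  "diff_len_query G u v \<longleftrightarrow> (\<exists>\<rho> \<rho>'. is_path G \<rho> \<and> is_path G \<rho>' \<and>
      pnode \<rho> 0 = u \<and> pnode \<rho> (plen \<rho>) = v \<and> pnode \<rho>' 0 = u \<and> pnode \<rho>' (plen \<rho>') = v \<and>
      plen \<rho> \<noteq> plen \<rho>')"

end

theory Submission
  imports Defs
begin


definition lenb :: "nat \<Rightarrow> nat \<Rightarrow> bool \<Rightarrow> nat" where
  "lenb n m b = (if b then m else n)"

definition nd :: "nat \<Rightarrow> nat \<Rightarrow> bool \<Rightarrow> nat \<Rightarrow> nat" where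
  "nd n m b h = (if h = 0 then 0 else if h = lenb n m b then 1 else 2*h + (if b then 1 else 0))"

definition inj_nat :: "nat \<Rightarrow> 'i::infinite" where
  "inj_nat = (SOME f. inj f)"

lemma inj_inj_nat: "inj (inj_nat :: nat \<Rightarrow> 'i::infinite)"
proof -
  obtain f :: "nat \<Rightarrow> 'i" where "inj f" using arb_countable_map[of "{}"] by auto
  then show ?thesis unfolding inj_nat_def by (metis someI)
qed

definition Tg :: "'a \<Rightarrow> nat \<Rightarrow> nat \<Rightarrow> ('a, 'i::infinite, 'd) dgraph" where
  "Tg c n m = \<lparr>nodes = {nd n m b h | b h. h \<le> lenb n m b},
     edges = {(nd n m b h, c, nd n m b (Suc h)) | b h. h < lenb n m b},
     idof = inj_nat, dataof = (\<lambda>_. undefined)\<rparr>"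

lemma nd_eq:
  assumes "0 < n" "0 < m" "h \<le> lenb n m b" "h' \<le> lenb n m b'"
  shows "nd n m b h = nd n m b' h' \<longleftrightarrow>
    (h = 0 \<and> h' = 0) \<or> (h = lenb n m b \<and> h' = lenb n m b') \<or> (b = b' \<and> h = h')"
  using assms unfolding nd_def lenb_def by (auto split: if_splits) presburger+

lemma nd_le: "nd n m b h \<le> 2*h+1"
  unfolding nd_def by auto

lemma is_dgraph_Tg: "0 < n \<Longrightarrow> 0 < m \<Longrightarrow> is_dgraph (Tg c n m)"
  unfolding is_dgraph_def Tg_def
  apply (auto intro: inj_on_subset[OF inj_inj_nat])
    apply (rule finite_subset[of _ "{..2*(n+m)+1}"])
     apply clarsimp
     apply (rule order_trans[OF nd_le]) apply (auto simp: lenb_def split: if_splits)[1]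
    apply simp
   apply (rule_tac x=ba in exI, rule_tac x="h" in exI, simp)
  apply (rule_tac x=ba in exI, rule_tac x="Suc h" in exI, simp)
  done

definition pdesc :: "'a \<Rightarrow> nat \<Rightarrow> nat \<Rightarrow> 'a path \<Rightarrow> bool \<Rightarrow> nat \<Rightarrow> bool" where
  "pdesc c n m \<rho> b a \<longleftrightarrow> a + plen \<rho> \<le> lenb n m b \<and> (\<forall>i\<le>plen \<rho>. pnode \<rho> i = nd n m b (a+i))
     \<and> (\<forall>i. 1 \<le> i \<and> i \<le> plen \<rho> \<longrightarrow> plabel \<rho> i = c)"

lemma edge_Tg:
  assumes "(v, l, w) \<in> edges (Tg c n m :: ('a, 'i::infinite, 'd) dgraph)"
  shows "\<exists>b h. h < lenb n m b \<and> v = nd n m b h \<and> w = nd n m b (Suc h) \<and> l = c"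
  using assms unfolding Tg_def by auto

lemma edge_Tg_uniq:
  assumes "(v, l, w) \<in> edges (Tg c n m :: ('a, 'i::infinite, 'd) dgraph)"
    and "v = nd n m b0 h0" "0 < h0" "h0 \<le> lenb n m b0" "0 < n" "0 < m"
  shows "h0 < lenb n m b0 \<and> w = nd n m b0 (Suc h0) \<and> l = c"
proof -
  obtain b h where bh: "h < lenb n m b" "v = nd n m b h" "w = nd n m b (Suc h)" "l = c"
    using edge_Tg[OF assms(1)] by blast
  have "nd n m b h = nd n m b0 h0" using bh assms by simp
  then have "b = b0 \<and> h = h0" using nd_eq[of n m h b h0 b0] bh assms by auto
  then show ?thesis using bh by auto
qed

lemma path_desc:
  assumes "0 < n" "0 < m" "is_path (Tg c n m :: ('a, 'i::infinite, 'd) dgraph) \<rho>"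
  shows "\<exists>b a. pdesc c n m \<rho> b a"
proof (cases "plen \<rho> = 0")
  case True
  have "pnode \<rho> 0 \<in> nodes (Tg c n m :: ('a, 'i::infinite, 'd) dgraph)"
    using assms(3) unfolding is_path_def by auto
  then obtain b h where "pnode \<rho> 0 = nd n m b h" "h \<le> lenb n m b" unfolding Tg_def by auto
  then show ?thesis using True unfolding pdesc_def by (intro exI[of _ b] exI[of _ h]) auto
next
  case False
  have E: "\<And>i. 1 \<le> i \<Longrightarrow> i \<le> plen \<rho> \<Longrightarrow>
     (pnode \<rho> (i - 1), plabel \<rho> i, pnode \<rho> i) \<in> edges (Tg c n m :: ('a, 'i::infinite, 'd) dgraph)"
    using assms(3) unfolding is_path_def by auto
  obtain b h where bh: "h < lenb n m b" "pnode \<rho> 0 = nd n m b h" "pnode \<rho> 1 = nd n m b (Suc h)"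
      "plabel \<rho> 1 = c"
    using edge_Tg[OF E[of 1]] False by auto
  have I: "1 \<le> i \<longrightarrow> i \<le> plen \<rho> \<longrightarrow> pnode \<rho> i = nd n m b (h+i) \<and> h + i \<le> lenb n m b \<and> plabel \<rho> i = c" for i
  proof (induction i)
    case 0
    then show ?case by simp
  next
    case (Suc i)
    show ?case
    proof (cases "i = 0")
      case True
      then show ?thesis using bh by auto
    next
      case F: False
      show ?thesis
      proof (intro impI)
        assume a: "1 \<le> Suc i" "Suc i \<le> plen \<rho>"
        then have ih: "pnode \<rho> i = nd n m b (h+i)" "h + i \<le> lenb n m b" using Suc F by auto
        have "(pnode \<rho> i, plabel \<rho> (Suc i), pnode \<rho> (Suc i)) \<in> edges (Tg c n m :: ('a, 'i::infinite, 'd) dgraph)"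
          using E[of "Suc i"] a by simp
        from edge_Tg_uniq[OF this ih(1) _ ih(2) assms(1,2)] F
        show "pnode \<rho> (Suc i) = nd n m b (h + Suc i) \<and> h + Suc i \<le> lenb n m b \<and> plabel \<rho> (Suc i) = c"
          by auto
      qed
    qed
  qed
  have "pdesc c n m \<rho> b h"
    unfolding pdesc_def
  proof (intro conjI allI impI)
    show "h + plen \<rho> \<le> lenb n m b" using I[of "plen \<rho>"] False by auto
    fix i assume "i \<le> plen \<rho>"
    then show "pnode \<rho> i = nd n m b (h + i)" using I[of i] bh by (cases "i = 0") auto
  next
    fix i assume "1 \<le> i \<and> i \<le> plen \<rho>"
    then show "plabel \<rho> i = c" using I[of i] by auto
  qed
  then show ?thesis by blast
qed

definition walk :: "'a \<Rightarrow> nat \<Rightarrow> nat \<Rightarrow> bool \<Rightarrow> nat \<Rightarrow> nat \<Rightarrow> 'a path" where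
  "walk c n m b a k = (map (\<lambda>i. nd n m b (a+i)) [0..<Suc k], replicate k c)"

lemma walk_plen: "plen (walk c n m b a k) = k"
  unfolding walk_def plen_def by simp

lemma walk_pdesc: "a + k \<le> lenb n m b \<Longrightarrow> pdesc c n m (walk c n m b a k) b a"
  unfolding pdesc_def walk_plen
  unfolding walk_def pnode_def plabel_def
  by (auto simp del: upt_Suc simp: nth_append)

lemma walk_path: "a + k \<le> lenb n m b \<Longrightarrow> is_path (Tg c n m :: ('a, 'i::infinite, 'd) dgraph) (walk c n m b a k)"
  unfolding is_path_def walk_plen
  apply (intro conjI)
    apply (simp add: walk_def)
   apply (simp add: walk_def pnode_def Tg_def del: upt_Suc) apply (rule exI[of _ b], rule exI[of _ a], simp)
  apply (clarsimp simp: walk_def pnode_def plabel_def Tg_def simp del: upt_Suc)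
  subgoal for i
    apply (rule exI[of _ b], rule exI[of _ "a + (i - 1)"])
    apply (auto simp del: upt_Suc simp: nth_append)
    done
  done



definition clamp :: "nat \<Rightarrow> int \<Rightarrow> int" where
  "clamp k x = max (- (2^(Suc k))) (min (2^(Suc k)) x)"

definition good :: "nat \<Rightarrow> (int \<times> int) set \<Rightarrow> bool" where
  "good k S \<longleftrightarrow> (\<forall>(u,u')\<in>S. \<forall>(v,v')\<in>S. clamp k (v - u) = clamp k (v' - u'))"

lemma good_mono: "good k S \<Longrightarrow> S' \<subseteq> S \<Longrightarrow> good k S'"
  unfolding good_def by blast

lemma good_swap: "good k S \<Longrightarrow> good k (prod.swap ` S)"
  unfolding good_def by fastforce

lemma clamp_neg: "clamp k (- x) = - clamp k x"
proof -
  have "(0::int) \<le> 2^Suc k" by simp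
  then show ?thesis unfolding clamp_def by (smt (verit))
qed

lemma clamp_D: "(2::int)^Suc (Suc k) = 2 * 2^Suc k" by simp

lemma clamp_pos: "(2::int) \<le> 2^Suc k"
proof -
  have "(2::int)^1 \<le> 2^Suc k" by (rule power_increasing) auto
  then show ?thesis by simp
qed

lemma clamp_sign: "clamp k d = clamp k d' \<Longrightarrow> (d < 0 \<longleftrightarrow> d' < 0) \<and> (d = 0 \<longleftrightarrow> d' = 0) \<and> (d = 1 \<longleftrightarrow> d' = 1)"
  using clamp_pos[of k] unfolding clamp_def by (smt (verit))

lemma clamp_add:
  assumes "0 \<le> e" "0 \<le> e'" "e = e' \<or> (2^Suc k \<le> e \<and> 2^Suc k \<le> e')" "0 \<le> u"
    "clamp (Suc k) u = clamp (Suc k) u'"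
  shows "clamp k (e+u) = clamp k (e'+u')"
  using assms clamp_pos[of k] unfolding clamp_def clamp_D by (smt (verit))

lemma good_ext:
  assumes fin: "finite S" and g: "good (Suc k) S" and l: "(l,l') \<in> S" and u: "(u,u') \<in> S"
    and lz: "l \<le> z" and zu: "z \<le> u"
  shows "\<exists>z'. good k (insert (z,z') S)"
proof -
  define d :: int where "d = 2^Suc k"
  have d1: "2 \<le> d" using clamp_pos[of k] d_def by simp
  have cD: "clamp (Suc k) x = max (- (2*d)) (min (2*d) x)" for x
    unfolding clamp_def d_def clamp_D ..
  have cd: "clamp k x = max (- d) (min d x)" for x unfolding clamp_def d_def ..
  define lows where "lows = {x. \<exists>y. (x,y) \<in> S \<and> x \<le> z}"
  define highs where "highs = {x. \<exists>y. (x,y) \<in> S \<and> z \<le> x}"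
  have fl: "finite lows" unfolding lows_def
    by (rule finite_subset[of _ "fst ` S"]) (use fin in force)+
  have fh: "finite highs" unfolding highs_def
    by (rule finite_subset[of _ "fst ` S"]) (use fin in force)+
  have nl: "lows \<noteq> {}" using l lz unfolding lows_def by auto
  have nh: "highs \<noteq> {}" using u zu unfolding highs_def by auto
  define x1 where "x1 = Max lows"
  define x2 where "x2 = Min highs"
  have "x1 \<in> lows" unfolding x1_def using fl nl by (rule Max_in)
  then obtain y1 where y1: "(x1,y1) \<in> S" "x1 \<le> z" unfolding lows_def by auto
  have "x2 \<in> highs" unfolding x2_def using fh nh by (rule Min_in)
  then obtain y2 where y2: "(x2,y2) \<in> S" "z \<le> x2" unfolding highs_def by auto
  have split: "h \<le> x1 \<or> x2 \<le> h" if "(h,h') \<in> S" for h h'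
  proof (cases "h \<le> z")
    case True
    then have "h \<in> lows" using that unfolding lows_def by auto
    then show ?thesis unfolding x1_def using fl Max_ge by blast
  next
    case False
    then have "h \<in> highs" using that unfolding highs_def by auto
    then show ?thesis unfolding x2_def using fh Min_le by blast
  qed
  have gS: "clamp (Suc k) (v - w) = clamp (Suc k) (v' - w')" if "(w,w') \<in> S" "(v,v') \<in> S" for v v' w w'
    using g that unfolding good_def by fast
  have g12: "clamp (Suc k) (x2 - x1) = clamp (Suc k) (y2 - y1)" using gS[OF y1(1) y2(1)] .
  define z' where "z' = (if z - x1 < d then y1 + (z - x1) else if x2 - z < d then y2 - (x2 - z) else y1 + d)"
  have lowcond: "0 \<le> z' - y1 \<and> (z - x1 = z' - y1 \<or> (d \<le> z - x1 \<and> d \<le> z' - y1))"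
    using g12 y1 y2 d1 unfolding cD z'_def by (smt (verit))
  have highcond: "0 \<le> y2 - z' \<and> (x2 - z = y2 - z' \<or> (d \<le> x2 - z \<and> d \<le> y2 - z'))"
    using g12 y1 y2 d1 unfolding cD z'_def by (smt (verit))
  have key: "clamp k (z - h) = clamp k (z' - h')" if hS: "(h,h') \<in> S" for h h'
  proof (cases "h \<le> x1")
    case True
    have c: "clamp (Suc k) (x1 - h) = clamp (Suc k) (y1 - h')" using gS[OF hS y1(1)] .
    have "clamp k ((z - x1) + (x1 - h)) = clamp k ((z' - y1) + (y1 - h'))"
      apply (rule clamp_add[OF _ _ _ _ c])
      using lowcond y1 True d_def by auto
    then show ?thesis by simp
  next
    case False
    then have h2: "x2 \<le> h" using split[OF hS] by auto
    have c: "clamp (Suc k) (h - x2) = clamp (Suc k) (h' - y2)" using gS[OF y2(1) hS] .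
    have "clamp k ((x2 - z) + (h - x2)) = clamp k ((y2 - z') + (h' - y2))"
      apply (rule clamp_add[OF _ _ _ _ c])
      using highcond y2 h2 d_def by auto
    then have "clamp k (h - z) = clamp k (h' - z')" by simp
    then have "- clamp k (h - z) = - clamp k (h' - z')" by simp
    then show ?thesis unfolding clamp_neg[symmetric] by simp
  qed
  have key2: "clamp k (h - z) = clamp k (h' - z')" if hS: "(h,h') \<in> S" for h h'
  proof -
    have "- clamp k (z - h) = - clamp k (z' - h')" using key[OF hS] by simp
    then show ?thesis unfolding clamp_neg[symmetric] by simp
  qed
  have "good k (insert (z,z') S)"
    unfolding good_def
  proof (intro ballI, clarify)
    fix a a' b b' assume A: "(a,a') \<in> insert (z,z') S" "(b,b') \<in> insert (z,z') S"
    show "clamp k (b - a) = clamp k (b' - a')"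
    proof (cases "(a,a') = (z,z')")
      case True
      then show ?thesis using A(2) key2 by auto
    next
      case F1: False
      then have aS: "(a,a') \<in> S" using A(1) by auto
      show ?thesis
      proof (cases "(b,b') = (z,z')")
        case True
        then show ?thesis using key[OF aS] by auto
      next
        case False
        then have "(b,b') \<in> S" using A(2) by auto
        then have "clamp (Suc k) (b - a) = clamp (Suc k) (b' - a')" using gS[OF aS] by auto
        then show ?thesis unfolding cD cd using d1 by (smt (verit))
      qed
    qed
  qed
  then show ?thesis by blast
qed



fun rank :: "'a fm \<Rightarrow> nat" where
  "rank (Neg \<phi>) = rank \<phi>"
| "rank (Disj \<phi> \<psi>) = max (rank \<phi>) (rank \<psi>)"
| "rank (ExPos x \<phi>) = Suc (rank \<phi>)"
| "rank (ExPath p \<phi>) = Suc (Suc (rank \<phi>))"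
| "rank _ = 0"

definition Spairs :: "nat \<Rightarrow> nat \<Rightarrow> nat \<Rightarrow> nat \<Rightarrow> pathvar set \<Rightarrow> posvar set \<Rightarrow> (pathvar \<Rightarrow> bool)
   \<Rightarrow> (pathvar \<Rightarrow> nat) \<Rightarrow> (pathvar \<Rightarrow> nat) \<Rightarrow> (pathvar \<Rightarrow> 'a path) \<Rightarrow> (posvar \<Rightarrow> nat)
   \<Rightarrow> (pathvar \<Rightarrow> 'a path) \<Rightarrow> (posvar \<Rightarrow> nat) \<Rightarrow> bool \<Rightarrow> (int \<times> int) set" where
  "Spairs n1 m1 n2 m2 PV XV br a1 a2 P1 L1 P2 L2 b =
     {(0,0), (int (lenb n1 m1 b), int (lenb n2 m2 b))}
   \<union> (\<lambda>p. (int (a1 p), int (a2 p))) ` {p \<in> PV. br p = b}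
   \<union> (\<lambda>p. (int (a1 p + plen (P1 p)), int (a2 p + plen (P2 p)))) ` {p \<in> PV. br p = b}
   \<union> (\<lambda>x. (int (a1 (snd x) + L1 x), int (a2 (snd x) + L2 x))) ` {x \<in> XV. br (snd x) = b}"

definition invc where
  "invc c n1 m1 n2 m2 k PV XV P1 L1 P2 L2 \<longleftrightarrow> finite PV \<and> finite XV \<and> (\<exists>br a1 a2.
     (\<forall>p\<in>PV. pdesc c n1 m1 (P1 p) (br p) (a1 p) \<and> pdesc c n2 m2 (P2 p) (br p) (a2 p)) \<and>
     (\<forall>x\<in>XV. snd x \<in> PV \<and> L1 x \<le> plen (P1 (snd x)) \<and> L2 x \<le> plen (P2 (snd x))) \<and>
     (\<forall>b. good k (Spairs n1 m1 n2 m2 PV XV br a1 a2 P1 L1 P2 L2 b)))"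

lemma Spairs_swap: "Spairs n2 m2 n1 m1 PV XV br a2 a1 P2 L2 P1 L1 b
   = prod.swap ` Spairs n1 m1 n2 m2 PV XV br a1 a2 P1 L1 P2 L2 b"
  unfolding Spairs_def by (simp add: image_Un image_image)

lemma inv_sym: "invc c n1 m1 n2 m2 k PV XV P1 L1 P2 L2 \<Longrightarrow> invc c n2 m2 n1 m1 k PV XV P2 L2 P1 L1"
  unfolding invc_def
  apply (elim conjE exE)
  subgoal for br a1 a2
    apply (intro conjI, assumption, assumption)
    apply (rule exI[of _ br], rule exI[of _ a2], rule exI[of _ a1])
    apply (intro conjI)
      apply blast
     apply blast
    apply (intro allI)
    apply (subst Spairs_swap)
    apply (rule good_swap)
    apply blast
    done
  done

lemma Spairs_mono: "PV' \<subseteq> PV \<Longrightarrow> XV' \<subseteq> XV \<Longrightarrow>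
  Spairs n1 m1 n2 m2 PV' XV' br a1 a2 P1 L1 P2 L2 b \<subseteq> Spairs n1 m1 n2 m2 PV XV br a1 a2 P1 L1 P2 L2 b"
  unfolding Spairs_def by auto

lemma inv_mono: "invc c n1 m1 n2 m2 k PV XV P1 L1 P2 L2 \<Longrightarrow> PV' \<subseteq> PV \<Longrightarrow> XV' \<subseteq> XV \<Longrightarrow>
   \<forall>x\<in>XV'. snd x \<in> PV' \<Longrightarrow> invc c n1 m1 n2 m2 k PV' XV' P1 L1 P2 L2"
  unfolding invc_def
  apply (intro conjI)
    apply (blast intro: finite_subset)
   apply (blast intro: finite_subset)
  apply (elim conjE exE)
  subgoal for br a1 a2
    apply (rule exI[of _ br], rule exI[of _ a1], rule exI[of _ a2])
    apply (intro conjI)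
      apply blast
     apply blast
    apply (intro allI)
    subgoal for b
      apply (rule good_mono[OF _ Spairs_mono[of PV' PV XV' XV]])
        apply (erule_tac x=b in allE, assumption)
       apply assumption+
      done
    done
  done

lemma clamp_Suc_aux: "(2::int) \<le> d \<Longrightarrow> max (-(2*d)) (min (2*d) x) = max (-(2*d)) (min (2*d) y)
   \<Longrightarrow> max (-d) (min d x) = max (-d) (min d y)"
  by (simp add: max_def min_def split: if_splits)

lemma clamp_Suc: "clamp (Suc k) x = clamp (Suc k) y \<Longrightarrow> clamp k x = clamp k y"
  unfolding clamp_def clamp_D using clamp_pos[of k] clamp_Suc_aux by blast

lemma good_Suc: "good (Suc k) S \<Longrightarrow> good k S"
  unfolding good_def using clamp_Suc by fast


lemma Spairs_finite: "finite PV \<Longrightarrow> finite XV \<Longrightarrow> finite (Spairs n1 m1 n2 m2 PV XV br a1 a2 P1 L1 P2 L2 b)"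
  unfolding Spairs_def by simp

lemma Spairs_00: "(0,0) \<in> Spairs n1 m1 n2 m2 PV XV br a1 a2 P1 L1 P2 L2 b"
  unfolding Spairs_def by simp

lemma Spairs_len: "(int (lenb n1 m1 b), int (lenb n2 m2 b)) \<in> Spairs n1 m1 n2 m2 PV XV br a1 a2 P1 L1 P2 L2 b"
  unfolding Spairs_def by simp

lemma Spairs_start: "p \<in> PV \<Longrightarrow> br p = b \<Longrightarrow> (int (a1 p), int (a2 p)) \<in> Spairs n1 m1 n2 m2 PV XV br a1 a2 P1 L1 P2 L2 b"
  unfolding Spairs_def by blast

lemma Spairs_end: "p \<in> PV \<Longrightarrow> br p = b \<Longrightarrow> (int (a1 p + plen (P1 p)), int (a2 p + plen (P2 p))) \<in> Spairs n1 m1 n2 m2 PV XV br a1 a2 P1 L1 P2 L2 b"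
  unfolding Spairs_def by blast

lemma Spairs_pos: "x \<in> XV \<Longrightarrow> br (snd x) = b \<Longrightarrow> (int (a1 (snd x) + L1 x), int (a2 (snd x) + L2 x)) \<in> Spairs n1 m1 n2 m2 PV XV br a1 a2 P1 L1 P2 L2 b"
  unfolding Spairs_def by blast

lemma good_clamp: "good k S \<Longrightarrow> (u,u') \<in> S \<Longrightarrow> (v,v') \<in> S \<Longrightarrow> clamp k (v - u) = clamp k (v' - u')"
  unfolding good_def by fast

lemma idof_Tg: "idof (Tg c n m) = inj_nat" unfolding Tg_def by simp
lemma dataof_Tg: "dataof (Tg c n m) = (\<lambda>_. undefined)" unfolding Tg_def by simp

lemma atom_facts:
  assumes pd: "\<forall>p\<in>PV. pdesc c n1 m1 (P1 p) (br p) (a1 p) \<and> pdesc c n2 m2 (P2 p) (br p) (a2 p)"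
   and xv: "\<forall>x\<in>XV. snd x \<in> PV \<and> L1 x \<le> plen (P1 (snd x)) \<and> L2 x \<le> plen (P2 (snd x))"
   and gd: "\<forall>b. good k (Spairs n1 m1 n2 m2 PV XV br a1 a2 P1 L1 P2 L2 b)"
   and x: "x \<in> XV" and y: "y \<in> XV" and pos: "0<n1" "0<m1" "0<n2" "0<m2"
  shows "snd x = snd y \<Longrightarrow> (L1 x < L1 y \<longleftrightarrow> L2 x < L2 y)"
    and "snd x = snd y \<Longrightarrow> (L1 y = L1 x + 1 \<longleftrightarrow> L2 y = L2 x + 1)"
    and "(pnode (P1 (snd x)) (L1 x) = pnode (P1 (snd y)) (L1 y)) \<longleftrightarrow> (pnode (P2 (snd x)) (L2 x) = pnode (P2 (snd y)) (L2 y))"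
proof -
  let ?S = "\<lambda>b. Spairs n1 m1 n2 m2 PV XV br a1 a2 P1 L1 P2 L2 b"
  define q where "q = snd x"
  define q' where "q' = snd y"
  have px: "(int (a1 q + L1 x), int (a2 q + L2 x)) \<in> ?S (br q)" unfolding q_def by (rule Spairs_pos[OF x refl])
  have py: "(int (a1 q' + L1 y), int (a2 q' + L2 y)) \<in> ?S (br q')" unfolding q'_def by (rule Spairs_pos[OF y refl])
  {
    assume "snd x = snd y"
    then have qq: "q' = q" unfolding q_def q'_def by simp
    have py': "(int (a1 q + L1 y), int (a2 q + L2 y)) \<in> ?S (br q)" using py qq by simp
    have "clamp k (int (a1 q + L1 y) - int (a1 q + L1 x)) = clamp k (int (a2 q + L2 y) - int (a2 q + L2 x))"
      by (rule good_clamp[OF gd[rule_format] px py'])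
    moreover have "int (a1 q + L1 y) - int (a1 q + L1 x) = int (L1 y) - int (L1 x)" by simp
    moreover have "int (a2 q + L2 y) - int (a2 q + L2 x) = int (L2 y) - int (L2 x)" by simp
    ultimately have "clamp k (int (L1 y) - int (L1 x)) = clamp k (int (L2 y) - int (L2 x))" by simp
    from clamp_sign[OF this]
    show "(L1 x < L1 y \<longleftrightarrow> L2 x < L2 y)" and "(L1 y = L1 x + 1 \<longleftrightarrow> L2 y = L2 x + 1)" by auto
  }
  have qP: "q \<in> PV" "q' \<in> PV" using xv x y unfolding q_def q'_def by auto
  have pq: "pdesc c n1 m1 (P1 q) (br q) (a1 q)" "pdesc c n2 m2 (P2 q) (br q) (a2 q)" using pd qP by auto
  have pq': "pdesc c n1 m1 (P1 q') (br q') (a1 q')" "pdesc c n2 m2 (P2 q') (br q') (a2 q')" using pd qP by auto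
  have lx: "L1 x \<le> plen (P1 q)" "L2 x \<le> plen (P2 q)" using xv x unfolding q_def by auto
  have ly: "L1 y \<le> plen (P1 q')" "L2 y \<le> plen (P2 q')" using xv y unfolding q'_def by auto
  have n1x: "pnode (P1 q) (L1 x) = nd n1 m1 (br q) (a1 q + L1 x)" "a1 q + L1 x \<le> lenb n1 m1 (br q)"
    using pq(1) lx(1) unfolding pdesc_def by auto
  have n2x: "pnode (P2 q) (L2 x) = nd n2 m2 (br q) (a2 q + L2 x)" "a2 q + L2 x \<le> lenb n2 m2 (br q)"
    using pq(2) lx(2) unfolding pdesc_def by auto
  have n1y: "pnode (P1 q') (L1 y) = nd n1 m1 (br q') (a1 q' + L1 y)" "a1 q' + L1 y \<le> lenb n1 m1 (br q')"
    using pq'(1) ly(1) unfolding pdesc_def by auto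
  have n2y: "pnode (P2 q') (L2 y) = nd n2 m2 (br q') (a2 q' + L2 y)" "a2 q' + L2 y \<le> lenb n2 m2 (br q')"
    using pq'(2) ly(2) unfolding pdesc_def by auto
  have zero: "(a1 r + L1 z = 0) \<longleftrightarrow> (a2 r + L2 z = 0)" if "(int (a1 r + L1 z), int (a2 r + L2 z)) \<in> ?S (br r)" for r z
  proof -
    have "clamp k (int (a1 r + L1 z) - 0) = clamp k (int (a2 r + L2 z) - 0)"
      using good_clamp[OF gd[rule_format, of "br r"] Spairs_00 that] by simp
    from clamp_sign[OF this] have "(int (a1 r + L1 z) - 0 = 0) = (int (a2 r + L2 z) - 0 = 0)" by blast
    then show ?thesis by (metis diff_zero of_nat_eq_iff of_nat_0)
  qed
  have top: "(a1 r + L1 z = lenb n1 m1 (br r)) \<longleftrightarrow> (a2 r + L2 z = lenb n2 m2 (br r))" if "(int (a1 r + L1 z), int (a2 r + L2 z)) \<in> ?S (br r)" for r z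
  proof -
    have "clamp k (int (a1 r + L1 z) - int (lenb n1 m1 (br r))) = clamp k (int (a2 r + L2 z) - int (lenb n2 m2 (br r)))"
      using good_clamp[OF gd[rule_format, of "br r"] Spairs_len that] by simp
    from clamp_sign[OF this] have "(int (a1 r + L1 z) - int (lenb n1 m1 (br r)) = 0) = (int (a2 r + L2 z) - int (lenb n2 m2 (br r)) = 0)" by blast
    then show ?thesis by (metis eq_iff_diff_eq_0 of_nat_eq_iff)
  qed
  have same: "br q = br q' \<Longrightarrow> (a1 q + L1 x = a1 q' + L1 y \<longleftrightarrow> a2 q + L2 x = a2 q' + L2 y)"
  proof -
    assume bq: "br q = br q'"
    have py': "(int (a1 q' + L1 y), int (a2 q' + L2 y)) \<in> ?S (br q)" using py bq by simp
    have "clamp k (int (a1 q' + L1 y) - int (a1 q + L1 x)) = clamp k (int (a2 q' + L2 y) - int (a2 q + L2 x))"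
      by (rule good_clamp[OF gd[rule_format] px py'])
    from clamp_sign[OF this] have "(int (a1 q' + L1 y) - int (a1 q + L1 x) = 0) = (int (a2 q' + L2 y) - int (a2 q + L2 x) = 0)" by blast
    then show ?thesis by (metis eq_iff_diff_eq_0 of_nat_eq_iff)
  qed
  have "(pnode (P1 q) (L1 x) = pnode (P1 q') (L1 y)) \<longleftrightarrow>
      (a1 q + L1 x = 0 \<and> a1 q' + L1 y = 0) \<or> (a1 q + L1 x = lenb n1 m1 (br q) \<and> a1 q' + L1 y = lenb n1 m1 (br q'))
      \<or> (br q = br q' \<and> a1 q + L1 x = a1 q' + L1 y)"
    unfolding n1x n1y by (rule nd_eq[OF pos(1,2) n1x(2) n1y(2)])
  also have "\<dots> \<longleftrightarrow> (a2 q + L2 x = 0 \<and> a2 q' + L2 y = 0) \<or> (a2 q + L2 x = lenb n2 m2 (br q) \<and> a2 q' + L2 y = lenb n2 m2 (br q'))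
      \<or> (br q = br q' \<and> a2 q + L2 x = a2 q' + L2 y)"
    apply (simp only: zero[OF px] zero[OF py] top[OF px] top[OF py])
    using same by blast
  also have "\<dots> \<longleftrightarrow> (pnode (P2 q) (L2 x) = pnode (P2 q') (L2 y))"
    unfolding n2x n2y by (rule nd_eq[OF pos(3,4) n2x(2) n2y(2), symmetric])
  finally show "(pnode (P1 (snd x)) (L1 x) = pnode (P1 (snd y)) (L1 y)) \<longleftrightarrow> (pnode (P2 (snd x)) (L2 x) = pnode (P2 (snd y)) (L2 y))"
    unfolding q_def q'_def .
qed




lemma Spairs_mem: "w \<in> Spairs n1 m1 n2 m2 PV XV br a1 a2 P1 L1 P2 L2 b \<longleftrightarrow>
   w = (0,0) \<or> w = (int (lenb n1 m1 b), int (lenb n2 m2 b))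
   \<or> (\<exists>p\<in>PV. br p = b \<and> w = (int (a1 p), int (a2 p)))
   \<or> (\<exists>p\<in>PV. br p = b \<and> w = (int (a1 p + plen (P1 p)), int (a2 p + plen (P2 p))))
   \<or> (\<exists>x\<in>XV. br (snd x) = b \<and> w = (int (a1 (snd x) + L1 x), int (a2 (snd x) + L2 x)))"
  unfolding Spairs_def by blast

lemma Spairs_updpos1:
  "Spairs n1 m1 n2 m2 PV (insert x XV) br a1 a2 P1 (L1(x:=i)) P2 (L2(x:=j)) (br (snd x))
   \<subseteq> insert (int (a1 (snd x) + i), int (a2 (snd x) + j)) (Spairs n1 m1 n2 m2 PV XV br a1 a2 P1 L1 P2 L2 (br (snd x)))"
  apply (rule subsetI)
  apply (subst (asm) Spairs_mem)
  apply (elim disjE bexE conjE)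
      apply (hypsubst, rule insertI2, rule Spairs_00)
     apply (hypsubst, rule insertI2, rule Spairs_len)
    apply (hypsubst, rule insertI2, rule Spairs_start, assumption+)
   apply (hypsubst, rule insertI2, rule Spairs_end, assumption+)
  subgoal for w y
    apply (cases "y = x")
     apply (hypsubst, simp only: fun_upd_same, rule insertI1)
    apply (hypsubst, (subst fun_upd_other, assumption)+, rule insertI2, rule Spairs_pos)
     apply simp
    apply assumption
    done
  done

lemma Spairs_updpos2:
  "br (snd x) \<noteq> b \<Longrightarrow> Spairs n1 m1 n2 m2 PV (insert x XV) br a1 a2 P1 (L1(x:=i)) P2 (L2(x:=j)) b
   \<subseteq> Spairs n1 m1 n2 m2 PV XV br a1 a2 P1 L1 P2 L2 b"
  apply (rule subsetI)
  apply (subst (asm) Spairs_mem)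
  apply (elim disjE bexE conjE)
      apply (hypsubst, rule Spairs_00)
     apply (hypsubst, rule Spairs_len)
    apply (hypsubst, rule Spairs_start; simp)
   apply (hypsubst, rule Spairs_end; simp)
  subgoal for w y
    apply (cases "y = x")
     apply simp
    apply (hypsubst, (subst fun_upd_other, assumption)+, rule Spairs_pos; simp)
    done
  done


lemma Spairs_updpath1:
  assumes "p \<notin> PV0" "\<forall>y\<in>XV0. snd y \<noteq> p"
  shows "Spairs n1 m1 n2 m2 (insert p PV0) XV0 (br(p:=b0)) (a1(p:=u1)) (a2(p:=u2)) (P1(p:=\<rho>1)) L1 (P2(p:=\<rho>2)) L2 b0
   \<subseteq> insert (int (u1 + plen \<rho>1), int (u2 + plen \<rho>2)) (insert (int u1, int u2) (Spairs n1 m1 n2 m2 PV0 XV0 br a1 a2 P1 L1 P2 L2 b0))"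
  apply (rule subsetI)
  apply (subst (asm) Spairs_mem)
  apply (elim disjE bexE conjE)
      apply (hypsubst, rule insertI2, rule insertI2, rule Spairs_00)
     apply (hypsubst, rule insertI2, rule insertI2, rule Spairs_len)
  subgoal for w q
    apply (cases "q = p")
     apply simp
    apply (hypsubst, (subst fun_upd_other, assumption)+, rule insertI2, rule insertI2, rule Spairs_start; simp)
    done
  subgoal for w q
    apply (cases "q = p")
     apply simp
    apply (hypsubst, (subst fun_upd_other, assumption)+, rule insertI2, rule insertI2, rule Spairs_end; simp)
    done
  subgoal for w y
    using assms(2) apply -
    apply (drule bspec, assumption)
    apply (hypsubst, (subst fun_upd_other, assumption)+, rule insertI2, rule insertI2, rule Spairs_pos; simp)
    done
  done

lemma Spairs_updpath2:
  assumes "p \<notin> PV0" "\<forall>y\<in>XV0. snd y \<noteq> p" "b0 \<noteq> b"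
  shows "Spairs n1 m1 n2 m2 (insert p PV0) XV0 (br(p:=b0)) (a1(p:=u1)) (a2(p:=u2)) (P1(p:=\<rho>1)) L1 (P2(p:=\<rho>2)) L2 b
   \<subseteq> Spairs n1 m1 n2 m2 PV0 XV0 br a1 a2 P1 L1 P2 L2 b"
  apply (rule subsetI)
  apply (subst (asm) Spairs_mem)
  apply (elim disjE bexE conjE)
      apply (hypsubst, rule Spairs_00)
     apply (hypsubst, rule Spairs_len)
  subgoal for w q
    apply (cases "q = p")
    using assms(3) apply simp
    apply (hypsubst, (subst fun_upd_other, assumption)+, rule Spairs_start; simp)
    done
  subgoal for w q
    apply (cases "q = p")
    using assms(3) apply simp
    apply (hypsubst, (subst fun_upd_other, assumption)+, rule Spairs_end; simp)
    done
  subgoal for w y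
    using assms(2) apply -
    apply (drule bspec, assumption)
    apply (hypsubst, (subst fun_upd_other, assumption)+, rule Spairs_pos; simp)
    done
  done



lemma main:
  fixes \<phi> :: "'a fm"
  shows "wf_WL \<phi> \<Longrightarrow> rank \<phi> \<le> k \<Longrightarrow> fpathv \<phi> \<subseteq> PV \<Longrightarrow> fpv \<phi> \<subseteq> XV \<Longrightarrow> 0<n1 \<Longrightarrow> 0<m1 \<Longrightarrow> 0<n2 \<Longrightarrow> 0<m2 \<Longrightarrow>
   invc c n1 m1 n2 m2 k PV XV P1 L1 P2 L2 \<Longrightarrow> sat (Tg c n1 m1 :: ('a,'i::infinite,'d) dgraph) P1 L1 \<phi>
   \<Longrightarrow> sat (Tg c n2 m2 :: ('a,'i,'d) dgraph) P2 L2 \<phi>"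
proof (induction \<phi> arbitrary: k PV XV P1 L1 P2 L2 n1 m1 n2 m2)
  case (Edge a x y)
  note pr = Edge.prems
  from pr(9) obtain br a1 a2 where
    pd: "\<forall>p\<in>PV. pdesc c n1 m1 (P1 p) (br p) (a1 p) \<and> pdesc c n2 m2 (P2 p) (br p) (a2 p)" and
    xv: "\<forall>x\<in>XV. snd x \<in> PV \<and> L1 x \<le> plen (P1 (snd x)) \<and> L2 x \<le> plen (P2 (snd x))" and
    gd: "\<forall>b. good k (Spairs n1 m1 n2 m2 PV XV br a1 a2 P1 L1 P2 L2 b)"
    unfolding invc_def by blast
  have xy: "x \<in> XV" "y \<in> XV" using pr(4) by auto
  have sxy: "snd x = snd y" using pr(1) by simp
  have yP: "snd y \<in> PV" using xv xy by auto
  have pd1: "pdesc c n1 m1 (P1 (snd y)) (br (snd y)) (a1 (snd y))"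
    and pd2: "pdesc c n2 m2 (P2 (snd y)) (br (snd y)) (a2 (snd y))" using pd yP by auto
  have s1: "L1 y = L1 x + 1" "plabel (P1 (snd y)) (L1 y) = a" using pr(10) unfolding sat.simps by blast+
  have l2: "L2 y = L2 x + 1" using atom_facts(2)[OF pd xv gd xy pr(5-8) sxy] s1 by simp
  have l2b: "L2 y \<le> plen (P2 (snd y))" "L1 y \<le> plen (P1 (snd y))" using xv xy by auto
  have "plabel (P1 (snd y)) (L1 y) = c" using pd1 s1 l2b unfolding pdesc_def by auto
  moreover have "plabel (P2 (snd y)) (L2 y) = c" using pd2 l2 l2b unfolding pdesc_def by auto
  ultimately show ?case using s1 l2 l2b by simp
next
  case (Less x y)
  note pr = Less.prems
  from pr(9) obtain br a1 a2 where
    pd: "\<forall>p\<in>PV. pdesc c n1 m1 (P1 p) (br p) (a1 p) \<and> pdesc c n2 m2 (P2 p) (br p) (a2 p)" and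
    xv: "\<forall>x\<in>XV. snd x \<in> PV \<and> L1 x \<le> plen (P1 (snd x)) \<and> L2 x \<le> plen (P2 (snd x))" and
    gd: "\<forall>b. good k (Spairs n1 m1 n2 m2 PV XV br a1 a2 P1 L1 P2 L2 b)"
    unfolding invc_def by blast
  have xy: "x \<in> XV" "y \<in> XV" using pr(4) by auto
  have sxy: "snd x = snd y" using pr(1) by simp
  show ?case using atom_facts(1)[OF pd xv gd xy pr(5-8) sxy] pr(10) by simp
next
  case (EqId x y)
  note pr = EqId.prems
  from pr(9) obtain br a1 a2 where
    pd: "\<forall>p\<in>PV. pdesc c n1 m1 (P1 p) (br p) (a1 p) \<and> pdesc c n2 m2 (P2 p) (br p) (a2 p)" and
    xv: "\<forall>x\<in>XV. snd x \<in> PV \<and> L1 x \<le> plen (P1 (snd x)) \<and> L2 x \<le> plen (P2 (snd x))" and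
    gd: "\<forall>b. good k (Spairs n1 m1 n2 m2 PV XV br a1 a2 P1 L1 P2 L2 b)"
    unfolding invc_def by blast
  have xy: "x \<in> XV" "y \<in> XV" using pr(4) by auto
  show ?case using atom_facts(3)[OF pd xv gd xy pr(5-8)] pr(10)
    by (simp add: idof_Tg inj_eq[OF inj_inj_nat])
next
  case (EqData x y)
  then show ?case by (simp add: dataof_Tg)
next
  case (Neg \<phi>)
  note pr = Neg.prems
  have "\<not> sat (Tg c n2 m2 :: ('a,'i,'d) dgraph) P2 L2 \<phi>"
  proof
    assume a: "sat (Tg c n2 m2 :: ('a,'i,'d) dgraph) P2 L2 \<phi>"
    have "sat (Tg c n1 m1 :: ('a,'i,'d) dgraph) P1 L1 \<phi>"
      by (rule Neg.IH[OF _ _ _ _ _ _ _ _ inv_sym[OF pr(9)] a]) (use pr in auto)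
    then show False using pr(10) by simp
  qed
  then show ?case by simp
next
  case (Disj \<phi>1 \<phi>2)
  note pr = Disj.prems
  from pr(10) have "sat (Tg c n1 m1 :: ('a,'i,'d) dgraph) P1 L1 \<phi>1 \<or> sat (Tg c n1 m1 :: ('a,'i,'d) dgraph) P1 L1 \<phi>2"
    by simp
  then show ?case
  proof
    assume h: "sat (Tg c n1 m1 :: ('a,'i,'d) dgraph) P1 L1 \<phi>1"
    have "sat (Tg c n2 m2 :: ('a,'i,'d) dgraph) P2 L2 \<phi>1"
      by (rule Disj.IH(1)[OF _ _ _ _ _ _ _ _ pr(9) h]) (use pr in auto)
    then show ?thesis by simp
  next
    assume h: "sat (Tg c n1 m1 :: ('a,'i,'d) dgraph) P1 L1 \<phi>2"
    have "sat (Tg c n2 m2 :: ('a,'i,'d) dgraph) P2 L2 \<phi>2"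
      by (rule Disj.IH(2)[OF _ _ _ _ _ _ _ _ pr(9) h]) (use pr in auto)
    then show ?thesis by simp
  qed
next
  case (ExPos x \<phi>)
  note pr = ExPos.prems
  obtain k' where k: "k = Suc k'" "rank \<phi> \<le> k'" using pr(2) by (cases k) auto
  have qP: "snd x \<in> PV" using pr(3) by simp
  have fpvphi: "fpv \<phi> \<subseteq> insert x XV" using pr(4) by auto
  have fpphi: "fpathv \<phi> \<subseteq> PV" using pr(3) by simp
  have fin: "finite PV" "finite XV" using pr(9) unfolding invc_def by auto
  from pr(9) obtain br a1 a2 where
    pd: "\<forall>p\<in>PV. pdesc c n1 m1 (P1 p) (br p) (a1 p) \<and> pdesc c n2 m2 (P2 p) (br p) (a2 p)" and
    xv: "\<forall>x\<in>XV. snd x \<in> PV \<and> L1 x \<le> plen (P1 (snd x)) \<and> L2 x \<le> plen (P2 (snd x))" and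
    gd: "\<forall>b. good k (Spairs n1 m1 n2 m2 PV XV br a1 a2 P1 L1 P2 L2 b)"
    unfolding invc_def by blast
  from pr(10) obtain i where i: "i \<le> plen (P1 (snd x))"
    "sat (Tg c n1 m1 :: ('a,'i,'d) dgraph) P1 (L1(x:=i)) \<phi>" by auto
  define q where "q = snd x"
  let ?S = "Spairs n1 m1 n2 m2 PV XV br a1 a2 P1 L1 P2 L2 (br q)"
  have gS: "good (Suc k') ?S" using gd k by simp
  have st: "(int (a1 q), int (a2 q)) \<in> ?S" using Spairs_start[OF qP refl] unfolding q_def .
  have en: "(int (a1 q + plen (P1 q)), int (a2 q + plen (P2 q))) \<in> ?S"
    using Spairs_end[OF qP refl] unfolding q_def .
  have lz: "int (a1 q) \<le> int (a1 q + i)" by simp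
  have zu: "int (a1 q + i) \<le> int (a1 q + plen (P1 q))" using i unfolding q_def by simp
  obtain z' where z': "good k' (insert (int (a1 q + i), z') ?S)"
    using good_ext[OF Spairs_finite[OF fin] gS st en lz zu] by blast
  have c1: "clamp k' (int (a1 q + i) - int (a1 q)) = clamp k' (z' - int (a2 q))"
    by (rule good_clamp[OF z' insertI2[OF st] insertI1])
  have c2: "clamp k' (int (a1 q + plen (P1 q)) - int (a1 q + i)) = clamp k' (int (a2 q + plen (P2 q)) - z')"
    by (rule good_clamp[OF z' insertI1 insertI2[OF en]])
  have h1: "0 \<le> z' - int (a2 q)" using clamp_sign[OF c1] by simp
  have h2: "0 \<le> int (a2 q + plen (P2 q)) - z'" using clamp_sign[OF c2] i unfolding q_def by simp
  define j where "j = nat (z' - int (a2 q))"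
  have j: "z' = int (a2 q + j)" "j \<le> plen (P2 q)" using h1 h2 unfolding j_def by auto
  have inv': "invc c n1 m1 n2 m2 k' PV (insert x XV) P1 (L1(x:=i)) P2 (L2(x:=j))"
    unfolding invc_def
  proof (intro conjI exI)
    show "finite PV" "finite (insert x XV)" using fin by auto
    show "\<forall>p\<in>PV. pdesc c n1 m1 (P1 p) (br p) (a1 p) \<and> pdesc c n2 m2 (P2 p) (br p) (a2 p)" by (rule pd)
    show "\<forall>y\<in>insert x XV. snd y \<in> PV \<and> (L1(x := i)) y \<le> plen (P1 (snd y)) \<and> (L2(x := j)) y \<le> plen (P2 (snd y))"
      using xv qP i j unfolding q_def by auto
    show "\<forall>b. good k' (Spairs n1 m1 n2 m2 PV (insert x XV) br a1 a2 P1 (L1(x := i)) P2 (L2(x := j)) b)"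
    proof
      fix b
      show "good k' (Spairs n1 m1 n2 m2 PV (insert x XV) br a1 a2 P1 (L1(x := i)) P2 (L2(x := j)) b)"
      proof (cases "br q = b")
        case True
        have z'': "good k' (insert (int (a1 (snd x) + i), int (a2 (snd x) + j)) (Spairs n1 m1 n2 m2 PV XV br a1 a2 P1 L1 P2 L2 (br (snd x))))"
          using z' j unfolding q_def by simp
        have "good k' (Spairs n1 m1 n2 m2 PV (insert x XV) br a1 a2 P1 (L1(x := i)) P2 (L2(x := j)) (br (snd x)))"
          by (rule good_mono[OF z'' Spairs_updpos1])
        with True show ?thesis unfolding q_def by simp
      next
        case False
        then have ne: "br (snd x) \<noteq> b" unfolding q_def .
        have "good k' (Spairs n1 m1 n2 m2 PV XV br a1 a2 P1 L1 P2 L2 b)" using gd k good_Suc by auto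
        then show ?thesis by (rule good_mono[OF _ Spairs_updpos2[where br=br and x=x and b=b, OF ne]])
      qed
    qed
  qed
  have "sat (Tg c n2 m2 :: ('a,'i,'d) dgraph) P2 (L2(x:=j)) \<phi>"
    by (rule ExPos.IH[OF _ _ _ _ _ _ _ _ inv' i(2)]) (use pr k fpvphi fpphi in auto)
  then show ?case using j(2) unfolding q_def by auto
next
  case (ExPath p \<phi>)
  note pr = ExPath.prems
  obtain k' where k: "k = Suc (Suc k')" "rank \<phi> \<le> k'" using pr(2)
    by (metis Suc_le_D rank.simps(4) Suc_le_mono)
  have wfphi: "wf_WL \<phi>" "\<forall>y\<in>fpv \<phi>. snd y \<noteq> p" using pr(1) by auto
  have fin: "finite PV" "finite XV" using pr(9) unfolding invc_def by auto
  from pr(9) obtain br a1 a2 where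
    pd: "\<forall>p\<in>PV. pdesc c n1 m1 (P1 p) (br p) (a1 p) \<and> pdesc c n2 m2 (P2 p) (br p) (a2 p)" and
    xv: "\<forall>x\<in>XV. snd x \<in> PV \<and> L1 x \<le> plen (P1 (snd x)) \<and> L2 x \<le> plen (P2 (snd x))" and
    gd: "\<forall>b. good k (Spairs n1 m1 n2 m2 PV XV br a1 a2 P1 L1 P2 L2 b)"
    unfolding invc_def by blast
  from pr(10) obtain \<rho> where \<rho>: "is_path (Tg c n1 m1 :: ('a,'i,'d) dgraph) \<rho>"
    "sat (Tg c n1 m1 :: ('a,'i,'d) dgraph) (P1(p:=\<rho>)) L1 \<phi>" by auto
  obtain b0 a where pdr: "pdesc c n1 m1 \<rho> b0 a" using path_desc[OF pr(5,6) \<rho>(1)] by blast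
  define PV0 where "PV0 = PV - {p}"
  define XV0 where "XV0 = {y \<in> XV. snd y \<noteq> p}"
  have fin0: "finite PV0" "finite XV0" using fin unfolding PV0_def XV0_def by auto
  let ?S0 = "\<lambda>b. Spairs n1 m1 n2 m2 PV0 XV0 br a1 a2 P1 L1 P2 L2 b"
  have gS0: "good k (?S0 b)" for b
    by (rule good_mono[OF gd[rule_format] Spairs_mono]) (auto simp: PV0_def XV0_def)
  have alen: "a + plen \<rho> \<le> lenb n1 m1 b0" using pdr unfolding pdesc_def by simp
  have lz1: "0 \<le> int a" by simp
  have zu1: "int a \<le> int (lenb n1 m1 b0)" using alen by simp
  obtain a' where ga: "good (Suc k') (insert (int a, a') (?S0 b0))"
    using good_ext[OF Spairs_finite[OF fin0] gS0[of b0, unfolded k] Spairs_00 Spairs_len lz1 zu1] by blast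
  have lz2: "0 \<le> int (a + plen \<rho>)" by simp
  have zu2: "int (a + plen \<rho>) \<le> int (lenb n1 m1 b0)" using alen by simp
  obtain b' where gb: "good k' (insert (int (a + plen \<rho>), b') (insert (int a, a') (?S0 b0)))"
    using good_ext[OF _ ga insertI2[OF Spairs_00] insertI2[OF Spairs_len] lz2 zu2] Spairs_finite[OF fin0] by blast
  let ?S2 = "insert (int (a + plen \<rho>), b') (insert (int a, a') (?S0 b0))"
  have m0: "(0,0) \<in> ?S2" by (intro insertI2 Spairs_00)
  have mL: "(int (lenb n1 m1 b0), int (lenb n2 m2 b0)) \<in> ?S2" by (intro insertI2 Spairs_len)
  have ma: "(int a, a') \<in> ?S2" by simp
  have mb: "(int (a + plen \<rho>), b') \<in> ?S2" by simp
  have o1: "0 \<le> a'" using clamp_sign[OF good_clamp[OF gb m0 ma]] by simp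
  have o2: "a' \<le> b'" using clamp_sign[OF good_clamp[OF gb ma mb]] by simp
  have o3: "b' \<le> int (lenb n2 m2 b0)" using clamp_sign[OF good_clamp[OF gb mb mL]] alen by simp
  define u2 where "u2 = nat a'"
  define kk where "kk = nat (b' - a')"
  define \<rho>2 where "\<rho>2 = walk c n2 m2 b0 u2 kk"
  have u2: "int u2 = a'" "int (u2 + plen \<rho>2) = b'" "u2 + kk \<le> lenb n2 m2 b0"
    using o1 o2 o3 unfolding u2_def kk_def \<rho>2_def walk_plen by auto
  have path2: "is_path (Tg c n2 m2 :: ('a,'i,'d) dgraph) \<rho>2" unfolding \<rho>2_def by (rule walk_path[OF u2(3)])
  have pdr2: "pdesc c n2 m2 \<rho>2 b0 u2" unfolding \<rho>2_def by (rule walk_pdesc[OF u2(3)])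
  have pnot: "p \<notin> PV0" unfolding PV0_def by simp
  have xnot: "\<forall>y\<in>XV0. snd y \<noteq> p" unfolding XV0_def by simp
  have inv': "invc c n1 m1 n2 m2 k' (insert p PV0) XV0 (P1(p:=\<rho>)) L1 (P2(p:=\<rho>2)) L2"
    unfolding invc_def
  proof (intro conjI exI)
    show "finite (insert p PV0)" "finite XV0" using fin0 by auto
    show "\<forall>q\<in>insert p PV0. pdesc c n1 m1 ((P1(p := \<rho>)) q) ((br(p:=b0)) q) ((a1(p:=a)) q)
        \<and> pdesc c n2 m2 ((P2(p := \<rho>2)) q) ((br(p:=b0)) q) ((a2(p:=u2)) q)"
      using pd pdr pdr2 unfolding PV0_def by auto
    show "\<forall>y\<in>XV0. snd y \<in> insert p PV0 \<and> L1 y \<le> plen ((P1(p := \<rho>)) (snd y)) \<and> L2 y \<le> plen ((P2(p := \<rho>2)) (snd y))"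
      using xv unfolding XV0_def PV0_def by auto
    show "\<forall>b. good k' (Spairs n1 m1 n2 m2 (insert p PV0) XV0 (br(p:=b0)) (a1(p:=a)) (a2(p:=u2)) (P1(p := \<rho>)) L1 (P2(p := \<rho>2)) L2 b)"
    proof
      fix b
      show "good k' (Spairs n1 m1 n2 m2 (insert p PV0) XV0 (br(p:=b0)) (a1(p:=a)) (a2(p:=u2)) (P1(p := \<rho>)) L1 (P2(p := \<rho>2)) L2 b)"
      proof (cases "b0 = b")
        case True
        have gb': "good k' (insert (int (a + plen \<rho>), int (u2 + plen \<rho>2)) (insert (int a, int u2) (?S0 b0)))"
          using gb u2 by simp
        have "good k' (Spairs n1 m1 n2 m2 (insert p PV0) XV0 (br(p:=b0)) (a1(p:=a)) (a2(p:=u2)) (P1(p := \<rho>)) L1 (P2(p := \<rho>2)) L2 b0)"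
          by (rule good_mono[OF gb' Spairs_updpath1[OF pnot xnot]])
        then show ?thesis using True by simp
      next
        case False
        have "good k' (?S0 b)" using gS0[of b] k good_Suc by auto
        then show ?thesis by (rule good_mono[OF _ Spairs_updpath2[OF pnot xnot False]])
      qed
    qed
  qed
  have fp1: "fpathv \<phi> \<subseteq> insert p PV0" using pr(3) unfolding PV0_def by auto
  have fp2: "fpv \<phi> \<subseteq> XV0" using pr(4) wfphi(2) unfolding XV0_def by auto
  have "sat (Tg c n2 m2 :: ('a,'i,'d) dgraph) (P2(p:=\<rho>2)) L2 \<phi>"
    by (rule ExPath.IH[OF wfphi(1) k(2) fp1 fp2 pr(5-8) inv' \<rho>(2)])
  then show ?case using path2 unfolding sat.simps by blast
qed



lemma wf_WL_MWL: "wf_WL \<phi> \<Longrightarrow> wf_MWL \<phi>"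
  by (induction \<phi>) auto

lemma path_nodes: "is_dgraph G \<Longrightarrow> is_path G \<rho> \<Longrightarrow> i \<le> plen \<rho> \<Longrightarrow> pnode \<rho> i \<in> nodes G"
proof (cases i)
  case 0
  assume "is_path G \<rho>" then show ?thesis using 0 unfolding is_path_def by simp
next
  case (Suc j)
  assume a: "is_dgraph G" "is_path G \<rho>" "i \<le> plen \<rho>"
  then have "(pnode \<rho> (i - 1), plabel \<rho> i, pnode \<rho> i) \<in> edges G" using Suc unfolding is_path_def by auto
  then show ?thesis using a(1) unfolding is_dgraph_def by auto
qed

definition Conj :: "'a fm \<Rightarrow> 'a fm \<Rightarrow> 'a fm" where "Conj A B = Neg (Disj (Neg A) (Neg B))"
definition firstp :: "posvar \<Rightarrow> 'a fm" where "firstp x = Neg (ExPos (9, snd x) (Less (9, snd x) x))"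
definition lastp :: "posvar \<Rightarrow> 'a fm" where "lastp x = Neg (ExPos (9, snd x) (Less x (9, snd x)))"

definition dl_fm :: "'a fm" where
  "dl_fm = ExPos (0,0) (ExPos (0,1) (ExPath 2 (ExPath 3 (ExPos (0,2) (ExPos (1,2) (ExPos (0,3) (ExPos (1,3)
     (Conj (firstp (0,2)) (Conj (lastp (1,2)) (Conj (firstp (0,3)) (Conj (lastp (1,3))
     (Conj (EqId (0,2) (0,0)) (Conj (EqId (1,2) (0,1)) (Conj (EqId (0,3) (0,0)) (Conj (EqId (1,3) (0,1))
      (Less (1,2) (1,3)))))))))))))))))"

lemma dl_wf: "wf_MWL dl_fm"
  unfolding dl_fm_def Conj_def firstp_def lastp_def by (simp add: insert_Diff_if)

lemma dl_free: "fpv dl_fm = {}" "fpathv dl_fm \<subseteq> {var_s, var_t}"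
  unfolding dl_fm_def Conj_def firstp_def lastp_def var_s_def var_t_def by auto

lemma first_iff: "(\<forall>j\<le>(n::nat). \<not> j < i) \<longleftrightarrow> i = 0" by auto
lemma last_iff: "(\<forall>j\<le>(n::nat). \<not> e < j) \<longleftrightarrow> n \<le> e" by (auto simp: not_less)

lemma dl_sem:
  assumes G: "is_dgraph G" and u: "u \<in> nodes G" and v: "v \<in> nodes G"
  shows "sat G (st_assign u v) (\<lambda>_. 0) dl_fm \<longleftrightarrow> diff_len_query G u v"
proof -
  have inj: "inj_on (idof G) (nodes G)" using G unfolding is_dgraph_def by simp
  have "sat G (st_assign u v) (\<lambda>_. 0) dl_fm \<longleftrightarrow>
    (\<exists>\<rho> \<omega>. is_path G \<rho> \<and> is_path G \<omega> \<and> idof G (pnode \<rho> 0) = idof G u \<and> idof G (pnode \<rho> (plen \<rho>)) = idof G v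
        \<and> idof G (pnode \<omega> 0) = idof G u \<and> idof G (pnode \<omega> (plen \<omega>)) = idof G v \<and> plen \<rho> < plen \<omega>)"
    unfolding dl_fm_def Conj_def firstp_def lastp_def
    apply (simp add: st_assign_def var_s_def var_t_def single_def plen_def pnode_def first_iff last_iff)
    apply (rule iffI)
     apply (elim exE conjE)
    subgoal for a b aa ba i ia ib ic
      apply (rule exI[of _ a], rule exI[of _ b], rule conjI, assumption)
      apply (rule exI[of _ aa], rule exI[of _ ba])
      apply (subgoal_tac "ia = length b \<and> ic = length ba")
       apply (elim conjE, hypsubst)
       apply simp
      apply linarith
      done
    apply (elim exE conjE)
    subgoal for a b aa ba
      apply (rule exI[of _ a], rule exI[of _ b], rule conjI, assumption)
      apply (rule exI[of _ aa], rule exI[of _ ba], rule conjI, assumption)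
      apply (rule exI[of _ 0], rule conjI, simp)
      apply (rule exI[of _ "length b"], rule conjI, simp)
      apply (rule exI[of _ 0], rule conjI, simp)
      apply (rule exI[of _ "length ba"], rule conjI, simp)
      apply simp
      done
    done
  also have "\<dots> \<longleftrightarrow> (\<exists>\<rho> \<omega>. is_path G \<rho> \<and> is_path G \<omega> \<and> pnode \<rho> 0 = u \<and> pnode \<rho> (plen \<rho>) = v
        \<and> pnode \<omega> 0 = u \<and> pnode \<omega> (plen \<omega>) = v \<and> plen \<rho> < plen \<omega>)"
  proof -
    have eqv: "\<And>\<rho> i w. is_path G \<rho> \<Longrightarrow> i \<le> plen \<rho> \<Longrightarrow> w \<in> nodes G \<Longrightarrow>
        idof G (pnode \<rho> i) = idof G w \<longleftrightarrow> pnode \<rho> i = w"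
    proof -
      fix \<rho> i w assume a: "is_path G \<rho>" "i \<le> plen \<rho>" "w \<in> nodes G"
      then have "pnode \<rho> i \<in> nodes G" by (intro path_nodes[OF G])
      then show "idof G (pnode \<rho> i) = idof G w \<longleftrightarrow> pnode \<rho> i = w" using inj_on_eq_iff[OF inj _ a(3)] by blast
    qed
    show ?thesis
    proof
      assume "\<exists>\<rho> \<omega>. is_path G \<rho> \<and> is_path G \<omega> \<and> idof G (pnode \<rho> 0) = idof G u \<and> idof G (pnode \<rho> (plen \<rho>)) = idof G v
        \<and> idof G (pnode \<omega> 0) = idof G u \<and> idof G (pnode \<omega> (plen \<omega>)) = idof G v \<and> plen \<rho> < plen \<omega>"
      then obtain \<rho> \<omega> where h: "is_path G \<rho>" "is_path G \<omega>" "idof G (pnode \<rho> 0) = idof G u" "idof G (pnode \<rho> (plen \<rho>)) = idof G v"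
        "idof G (pnode \<omega> 0) = idof G u" "idof G (pnode \<omega> (plen \<omega>)) = idof G v" "plen \<rho> < plen \<omega>" by blast
      show "\<exists>\<rho> \<omega>. is_path G \<rho> \<and> is_path G \<omega> \<and> pnode \<rho> 0 = u \<and> pnode \<rho> (plen \<rho>) = v
        \<and> pnode \<omega> 0 = u \<and> pnode \<omega> (plen \<omega>) = v \<and> plen \<rho> < plen \<omega>"
        using h eqv[OF h(1) _ u, of 0] eqv[OF h(1) _ v, of "plen \<rho>"] eqv[OF h(2) _ u, of 0] eqv[OF h(2) _ v, of "plen \<omega>"]
        by (intro exI[of _ \<rho>] exI[of _ \<omega>]) simp
    next
      assume "\<exists>\<rho> \<omega>. is_path G \<rho> \<and> is_path G \<omega> \<and> pnode \<rho> 0 = u \<and> pnode \<rho> (plen \<rho>) = v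
        \<and> pnode \<omega> 0 = u \<and> pnode \<omega> (plen \<omega>) = v \<and> plen \<rho> < plen \<omega>"
      then obtain \<rho> \<omega> where h: "is_path G \<rho>" "is_path G \<omega>" "pnode \<rho> 0 = u" "pnode \<rho> (plen \<rho>) = v"
        "pnode \<omega> 0 = u" "pnode \<omega> (plen \<omega>) = v" "plen \<rho> < plen \<omega>" by blast
      show "\<exists>\<rho> \<omega>. is_path G \<rho> \<and> is_path G \<omega> \<and> idof G (pnode \<rho> 0) = idof G u \<and> idof G (pnode \<rho> (plen \<rho>)) = idof G v
        \<and> idof G (pnode \<omega> 0) = idof G u \<and> idof G (pnode \<omega> (plen \<omega>)) = idof G v \<and> plen \<rho> < plen \<omega>"
        by (rule exI[of _ \<rho>], rule exI[of _ \<omega>]) (simp add: h)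
    qed
  qed
  also have "\<dots> \<longleftrightarrow> diff_len_query G u v"
    unfolding diff_len_query_def
  proof
    assume "\<exists>\<rho> \<omega>. is_path G \<rho> \<and> is_path G \<omega> \<and> pnode \<rho> 0 = u \<and> pnode \<rho> (plen \<rho>) = v
        \<and> pnode \<omega> 0 = u \<and> pnode \<omega> (plen \<omega>) = v \<and> plen \<rho> < plen \<omega>"
    then obtain \<rho> \<omega> where h: "is_path G \<rho>" "is_path G \<omega>" "pnode \<rho> 0 = u" "pnode \<rho> (plen \<rho>) = v"
        "pnode \<omega> 0 = u" "pnode \<omega> (plen \<omega>) = v" "plen \<rho> < plen \<omega>" by blast
    show "\<exists>\<rho> \<rho>'. is_path G \<rho> \<and> is_path G \<rho>' \<and> pnode \<rho> 0 = u \<and> pnode \<rho> (plen \<rho>) = v \<and>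
        pnode \<rho>' 0 = u \<and> pnode \<rho>' (plen \<rho>') = v \<and> plen \<rho> \<noteq> plen \<rho>'"
      by (rule exI[of _ \<rho>], rule exI[of _ \<omega>]) (use h in auto)
  next
    assume "\<exists>\<rho> \<rho>'. is_path G \<rho> \<and> is_path G \<rho>' \<and> pnode \<rho> 0 = u \<and> pnode \<rho> (plen \<rho>) = v \<and>
        pnode \<rho>' 0 = u \<and> pnode \<rho>' (plen \<rho>') = v \<and> plen \<rho> \<noteq> plen \<rho>'"
    then obtain \<rho> \<omega> where h: "is_path G \<rho>" "is_path G \<omega>" "pnode \<rho> 0 = u" "pnode \<rho> (plen \<rho>) = v"
        "pnode \<omega> 0 = u" "pnode \<omega> (plen \<omega>) = v" "plen \<rho> \<noteq> plen \<omega>" by blast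
    show "\<exists>\<rho> \<omega>. is_path G \<rho> \<and> is_path G \<omega> \<and> pnode \<rho> 0 = u \<and> pnode \<rho> (plen \<rho>) = v
        \<and> pnode \<omega> 0 = u \<and> pnode \<omega> (plen \<omega>) = v \<and> plen \<rho> < plen \<omega>"
    proof (cases "plen \<rho> < plen \<omega>")
      case True
      then show ?thesis by (rule_tac exI[of _ \<rho>], rule_tac exI[of _ \<omega>]) (simp add: h)
    next
      case False
      then have "plen \<omega> < plen \<rho>" using h(7) by simp
      then show ?thesis by (rule_tac exI[of _ \<omega>], rule_tac exI[of _ \<rho>]) (simp add: h)
    qed
  qed
  finally show ?thesis .
qed



lemma good2: "clamp k x = clamp k y \<Longrightarrow> good k {(0,0),(x,y)}"
  unfolding good_def using clamp_neg[of k x] clamp_neg[of k y] by auto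

lemma clamp_big: "(2::int)^Suc k \<le> x \<Longrightarrow> clamp k x = 2^Suc k"
  unfolding clamp_def by simp

lemma nodes_01: "0 < n \<Longrightarrow> (0::nat) \<in> nodes (Tg c n m) \<and> (1::nat) \<in> nodes (Tg c n m)"
  unfolding Tg_def
  apply simp
  apply (intro conjI)
   apply (rule exI[of _ False], rule exI[of _ 0], simp add: nd_def)
  apply (rule exI[of _ False], rule exI[of _ n], simp add: nd_def lenb_def)
  done

lemma pdesc_single0: "pdesc c n m (single 0) False 0"
  unfolding pdesc_def single_def plen_def pnode_def by (simp add: nd_def)

lemma pdesc_single1: "0 < n \<Longrightarrow> pdesc c n m (single 1) False n"
  unfolding pdesc_def single_def plen_def pnode_def by (simp add: nd_def lenb_def)

lemma nd_zero: "h \<le> lenb n m b \<Longrightarrow> nd n m b h = 0 \<longleftrightarrow> h = 0"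
  unfolding nd_def by auto

lemma nd_one: "0 < lenb n m b \<Longrightarrow> h \<le> lenb n m b \<Longrightarrow> nd n m b h = 1 \<longleftrightarrow> h = lenb n m b"
  unfolding nd_def by auto

lemma diff_Tg_false:
  assumes "0 < N"
  shows "\<not> diff_len_query (Tg c N N :: ('a, 'i::infinite, 'd) dgraph) 0 1"
proof
  have len: "\<And>\<rho>. is_path (Tg c N N :: ('a, 'i::infinite, 'd) dgraph) \<rho> \<Longrightarrow> pnode \<rho> 0 = 0 \<Longrightarrow> pnode \<rho> (plen \<rho>) = 1 \<Longrightarrow> plen \<rho> = N"
  proof -
    fix \<rho> assume p: "is_path (Tg c N N :: ('a, 'i::infinite, 'd) dgraph) \<rho>" "pnode \<rho> 0 = 0" "pnode \<rho> (plen \<rho>) = 1"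
    obtain b a where pd: "pdesc c N N \<rho> b a" using path_desc[OF assms assms p(1)] by blast
    have L: "lenb N N b = N" unfolding lenb_def by simp
    have al: "a + plen \<rho> \<le> lenb N N b" using pd unfolding pdesc_def by simp
    have "nd N N b a = 0" using pd p(2) unfolding pdesc_def by auto
    then have a0: "a = 0" using nd_zero[of a N N b] al by simp
    have "nd N N b (a + plen \<rho>) = 1" using pd p(3) unfolding pdesc_def by auto
    then have "a + plen \<rho> = lenb N N b" using nd_one[OF _ al] assms L by simp
    then show "plen \<rho> = N" using a0 L by simp
  qed
  assume "diff_len_query (Tg c N N :: ('a, 'i::infinite, 'd) dgraph) 0 1"
  then obtain \<rho> \<rho>' where h: "is_path (Tg c N N :: ('a, 'i::infinite, 'd) dgraph) \<rho>" "is_path (Tg c N N :: ('a, 'i::infinite, 'd) dgraph) \<rho>'"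
    "pnode \<rho> 0 = 0" "pnode \<rho> (plen \<rho>) = 1" "pnode \<rho>' 0 = 0" "pnode \<rho>' (plen \<rho>') = 1" "plen \<rho> \<noteq> plen \<rho>'"
    unfolding diff_len_query_def by blast
  show False using len[OF h(1,3,4)] len[OF h(2,5,6)] h(7) by simp
qed

lemma diff_Tg_true:
  assumes "0 < N"
  shows "diff_len_query (Tg c N (N+1) :: ('a, 'i::infinite, 'd) dgraph) 0 1"
proof -
  define \<rho> where "\<rho> = walk c N (N+1) False 0 N"
  define \<rho>' where "\<rho>' = walk c N (N+1) True 0 (N+1)"
  have p1: "is_path (Tg c N (N+1) :: ('a, 'i::infinite, 'd) dgraph) \<rho>" unfolding \<rho>_def by (rule walk_path) (simp add: lenb_def)
  have p2: "is_path (Tg c N (N+1) :: ('a, 'i::infinite, 'd) dgraph) \<rho>'" unfolding \<rho>'_def by (rule walk_path) (simp add: lenb_def)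
  have d1: "pdesc c N (N+1) \<rho> False 0" unfolding \<rho>_def by (rule walk_pdesc) (simp add: lenb_def)
  have d2: "pdesc c N (N+1) \<rho>' True 0" unfolding \<rho>'_def by (rule walk_pdesc) (simp add: lenb_def)
  have l: "plen \<rho> = N" "plen \<rho>' = N+1" unfolding \<rho>_def \<rho>'_def walk_plen by simp_all
  have "pnode \<rho> 0 = 0" "pnode \<rho> (plen \<rho>) = 1" using d1 l assms unfolding pdesc_def by (auto simp: nd_def lenb_def)
  moreover have "pnode \<rho>' 0 = 0" "pnode \<rho>' (plen \<rho>') = 1" using d2 l assms unfolding pdesc_def by (auto simp: nd_def lenb_def)
  ultimately show ?thesis unfolding diff_len_query_def using p1 p2 l
    by (intro exI[of _ \<rho>] exI[of _ \<rho>']) simp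
qed

lemma inv0:
  assumes N: "(2::int)^Suc k \<le> int N"
  shows "invc c N (N+1) N N k {0,1} {} (st_assign 0 1) (\<lambda>_. 0) (st_assign 0 1) (\<lambda>_. 0)"
proof -
  have Np: "0 < N" using N by (metis of_nat_0_less_iff order_less_le_trans zero_less_power zero_less_numeral)
  define a where "a = (\<lambda>p::nat. if p = 1 then N else 0)"
  have sa: "st_assign 0 1 p = (if p = 1 then single 1 else single 0)" if "p \<in> {0,1}" for p
    using that unfolding st_assign_def var_s_def var_t_def by auto
  have pd: "\<forall>p\<in>{0,1}. pdesc c N (N+1) (st_assign 0 1 p) ((\<lambda>_. False) p) (a p) \<and> pdesc c N N (st_assign 0 1 p) ((\<lambda>_. False) p) (a p)"
  proof -
    have s0: "st_assign 0 1 0 = single 0" and s1: "st_assign 0 1 1 = single 1"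
      unfolding st_assign_def var_s_def var_t_def by simp_all
    have a01: "a 0 = 0" "a 1 = N" unfolding a_def by simp_all
    have f: "pdesc c N (N+1) (st_assign 0 1 0) False (a 0)" "pdesc c N N (st_assign 0 1 0) False (a 0)"
      "pdesc c N (N+1) (st_assign 0 1 1) False (a 1)" "pdesc c N N (st_assign 0 1 1) False (a 1)"
      unfolding s0 s1 a01 by (rule pdesc_single0 pdesc_single1[OF Np])+
    show ?thesis using f by blast
  qed
  have sub: "Spairs N (N+1) N N {0,1} {} (\<lambda>_. False) a a (st_assign 0 1) (\<lambda>_. 0) (st_assign 0 1) (\<lambda>_. 0) b
     \<subseteq> {(0,0), (int (lenb N (N+1) b), int (lenb N N b))}" for b
  proof
    fix w assume "w \<in> Spairs N (N+1) N N {0,1} {} (\<lambda>_. False) a a (st_assign 0 1) (\<lambda>_. 0) (st_assign 0 1) (\<lambda>_. 0) b"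
    then show "w \<in> {(0,0), (int (lenb N (N+1) b), int (lenb N N b))}"
      unfolding Spairs_mem by (auto simp: a_def lenb_def single_def plen_def st_assign_def var_s_def var_t_def)
  qed
  have g: "good k {(0,0), (int (lenb N (N+1) b), int (lenb N N b))}" for b
  proof (rule good2)
    have "2^Suc k \<le> int (lenb N (N+1) b)" "2^Suc k \<le> int (lenb N N b)" using N unfolding lenb_def by auto
    then show "clamp k (int (lenb N (N+1) b)) = clamp k (int (lenb N N b))" by (simp add: clamp_big)
  qed
  show ?thesis unfolding invc_def
    apply (intro conjI)
      apply simp
     apply simp
    apply (rule exI[of _ "\<lambda>_. False"], rule exI[of _ a], rule exI[of _ a])
    apply (intro conjI)
      apply (rule pd)
     apply simp
    apply (intro allI)
    apply (rule good_mono[OF g sub])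
    done
qed



lemma not_WL: "\<not> WL_expressible (diff_len_query :: ('a, 'i::infinite, 'd) query)"
proof
  assume "WL_expressible (diff_len_query :: ('a, 'i, 'd) query)"
  then obtain \<phi> :: "'a fm" where wf: "wf_WL \<phi>" and ex: "expresses \<phi> (diff_len_query :: ('a, 'i, 'd) query)"
    unfolding WL_expressible_def by blast
  define k where "k = rank \<phi>"
  define N :: nat where "N = 2^Suc k"
  have N: "(2::int)^Suc k \<le> int N" unfolding N_def by simp
  have Np: "0 < N" unfolding N_def by simp
  have fr: "fpv \<phi> = {}" "fpathv \<phi> \<subseteq> {0,1}" using ex unfolding expresses_def var_s_def var_t_def by auto
  have exG: "\<And>G :: ('a, 'i, 'd) dgraph. is_dgraph G \<Longrightarrow> 0 \<in> nodes G \<Longrightarrow> 1 \<in> nodes G \<Longrightarrow>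
      (sat G (st_assign 0 1) (\<lambda>_. 0) \<phi> \<longleftrightarrow> diff_len_query G 0 1)"
    using ex unfolding expresses_def by blast
  have sat2: "sat (Tg undefined N (N+1) :: ('a, 'i, 'd) dgraph) (st_assign 0 1) (\<lambda>_. 0) \<phi>"
    using exG[OF is_dgraph_Tg[OF Np] conjunct1[OF nodes_01[OF Np]] conjunct2[OF nodes_01[OF Np]]]
      diff_Tg_true[OF Np] by simp
  have "sat (Tg undefined N N :: ('a, 'i, 'd) dgraph) (st_assign 0 1) (\<lambda>_. 0) \<phi>"
    by (rule main[OF wf _ fr(2) _ Np _ Np Np inv0[OF N] sat2]) (simp_all add: k_def fr(1) Np)
  then have "diff_len_query (Tg undefined N N :: ('a, 'i, 'd) dgraph) 0 1"
    using exG[OF is_dgraph_Tg[OF Np Np] conjunct1[OF nodes_01[OF Np]] conjunct2[OF nodes_01[OF Np]]] by simp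
  moreover have "\<not> diff_len_query (Tg undefined N N :: ('a, 'i, 'd) dgraph) 0 1" by (rule diff_Tg_false[OF Np])
  ultimately show False by blast
qed

theorem mainTheorem15:
  shows "(\<forall>Q :: ('a::finite, 'i::infinite, 'd::infinite) query.
            WL_expressible Q \<longrightarrow> MWL_expressible Q)
       \<and> MWL_expressible (diff_len_query :: ('a, 'i, 'd) query)
       \<and> \<not> WL_expressible (diff_len_query :: ('a, 'i, 'd) query)"
proof (intro conjI)
  show "\<forall>Q :: ('a::finite, 'i::infinite, 'd::infinite) query. WL_expressible Q \<longrightarrow> MWL_expressible Q"
    unfolding WL_expressible_def MWL_expressible_def using wf_WL_MWL by blast
  show "MWL_expressible (diff_len_query :: ('a, 'i, 'd) query)"
    unfolding MWL_expressible_def expresses_def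
    using dl_wf dl_free dl_sem by blast
  show "\<not> WL_expressible (diff_len_query :: ('a, 'i, 'd) query)" by (rule not_WL)
qed


end
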